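(* If $R$ is an Armendariz ring, then for every $n\ge 1$ the upper triangular matrix ring $T_n(R)$ is almost Armendariz.
   Context: All rings are associative with identity. A ring $R$ is Armendariz if whenever $f(x)=\sum_{i=0}^m a_ix^i$, $g(x)=\sum_{j=0}^n b_jx^j\in R[x]$ satisfy $f(x)g(x)=0$, then $a_ib_j=0$ for all $i,j$. For a ring $R$, $P(R)$ denotes the prime radical of $R$ (the intersection of all prime ideals of $R$, equivalently the set of strongly nilpotent elements of $R$). A ring $R$ is called almost Armendariz if whenever $f(x)=\sum_{i=0}^m a_ix^i$ and $g(x)=\sum_{j=0}^n b_jx^j\in R[x]$ satisfy $f(x)g(x)=0$, then $a_ib_j\in P(R)$ for all $0\le i\le m$, $0\le j\le n$. $T_n(R)$ denotes the ring of $n\times n$ upper triangular matrices over $R$. *)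

theory Defs
  imports "HOL-Algebra.Ideal"
begin

text \<open>Polynomials f = sum a_i x^i (i \<le> m), g = sum b_j x^j (j \<le> n) over a
(not necessarily commutative) ring R are given by coefficient functions.\<close>

definition poly_prod_coeff ::
  "('a, 'm) ring_scheme \<Rightarrow> nat \<Rightarrow> nat \<Rightarrow> (nat \<Rightarrow> 'a) \<Rightarrow> (nat \<Rightarrow> 'a) \<Rightarrow> nat \<Rightarrow> 'a" where
  "poly_prod_coeff R m n a b k =
     finsum R (\<lambda>p. a (fst p) \<otimes>\<^bsub>R\<^esub> b (snd p))
       {p. fst p \<le> m \<and> snd p \<le> n \<and> fst p + snd p = k}"

definition armendariz :: "('a, 'm) ring_scheme \<Rightarrow> bool" where
  "armendariz R \<longleftrightarrow>
     (\<forall>m n a b. (\<forall>i\<le>m. a i \<in> carrier R) \<longrightarrow> (\<forall>j\<le>n. b j \<in> carrier R) \<longrightarrow>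
        (\<forall>k. poly_prod_coeff R m n a b k = \<zero>\<^bsub>R\<^esub>) \<longrightarrow>
        (\<forall>i\<le>m. \<forall>j\<le>n. a i \<otimes>\<^bsub>R\<^esub> b j = \<zero>\<^bsub>R\<^esub>))"

text \<open>Prime ideals of a not necessarily commutative ring: proper two-sided
ideals P such that for ideals A, B with AB \<subseteq> P one has A \<subseteq> P or B \<subseteq> P.
(AB \<subseteq> P is equivalent to all products a b with a in A, b in B lying in P,
since P is closed under finite sums.)\<close>

definition nc_prime_ideal :: "('a, 'm) ring_scheme \<Rightarrow> 'a set \<Rightarrow> bool" where
  "nc_prime_ideal R P \<longleftrightarrow> ideal P R \<and> P \<noteq> carrier R \<and>
     (\<forall>A B. ideal A R \<longrightarrow> ideal B R \<longrightarrow>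
        (\<forall>x\<in>A. \<forall>y\<in>B. x \<otimes>\<^bsub>R\<^esub> y \<in> P) \<longrightarrow> A \<subseteq> P \<or> B \<subseteq> P)"

text \<open>Prime radical: intersection of all prime ideals (carrier R if there are none).\<close>

definition prime_radical :: "('a, 'm) ring_scheme \<Rightarrow> 'a set" where
  "prime_radical R = carrier R \<inter> \<Inter> {P. nc_prime_ideal R P}"

definition almost_armendariz :: "('a, 'm) ring_scheme \<Rightarrow> bool" where
  "almost_armendariz R \<longleftrightarrow>
     (\<forall>m n a b. (\<forall>i\<le>m. a i \<in> carrier R) \<longrightarrow> (\<forall>j\<le>n. b j \<in> carrier R) \<longrightarrow>
        (\<forall>k. poly_prod_coeff R m n a b k = \<zero>\<^bsub>R\<^esub>) \<longrightarrow>
        (\<forall>i\<le>m. \<forall>j\<le>n. a i \<otimes>\<^bsub>R\<^esub> b j \<in> prime_radical R))"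

text \<open>A matrix is a
function nat \<Rightarrow> nat \<Rightarrow> 'a with indices 0..n-1; entries outside the index range
and below the diagonal are zero.\<close>

definition upper_tri_ring :: "('a, 'm) ring_scheme \<Rightarrow> nat \<Rightarrow> (nat \<Rightarrow> nat \<Rightarrow> 'a) ring" where
  "upper_tri_ring R n =
     \<lparr>carrier = {M. (\<forall>i j. i < n \<and> j < n \<longrightarrow> M i j \<in> carrier R) \<and>
                    (\<forall>i j. \<not> (i \<le> j \<and> j < n) \<longrightarrow> M i j = \<zero>\<^bsub>R\<^esub>)},
      mult = (\<lambda>A B i j. if i < n \<and> j < n
                        then finsum R (\<lambda>k. A i k \<otimes>\<^bsub>R\<^esub> B k j) {..<n} else \<zero>\<^bsub>R\<^esub>),
      one = (\<lambda>i j. if i = j \<and> i < n then \<one>\<^bsub>R\<^esub> else \<zero>\<^bsub>R\<^esub>),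
      zero = (\<lambda>i j. \<zero>\<^bsub>R\<^esub>),
      add = (\<lambda>A B i j. if i < n \<and> j < n then A i j \<oplus>\<^bsub>R\<^esub> B i j else \<zero>\<^bsub>R\<^esub>)\<rparr>"

end

theory Submission
  imports Defs
begin

lemma ut_carrier: "carrier (upper_tri_ring R n) = {M. (\<forall>i j. i < n \<and> j < n \<longrightarrow> M i j \<in> carrier R) \<and>
                    (\<forall>i j. \<not> (i \<le> j \<and> j < n) \<longrightarrow> M i j = \<zero>\<^bsub>R\<^esub>)}"
  and ut_mult: "A \<otimes>\<^bsub>upper_tri_ring R n\<^esub> B = (\<lambda>i j. if i < n \<and> j < n
                        then finsum R (\<lambda>k. A i k \<otimes>\<^bsub>R\<^esub> B k j) {..<n} else \<zero>\<^bsub>R\<^esub>)"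
  and ut_zero: "\<zero>\<^bsub>upper_tri_ring R n\<^esub> = (\<lambda>i j. \<zero>\<^bsub>R\<^esub>)"
  and ut_add: "A \<oplus>\<^bsub>upper_tri_ring R n\<^esub> B = (\<lambda>i j. if i < n \<and> j < n then A i j \<oplus>\<^bsub>R\<^esub> B i j else \<zero>\<^bsub>R\<^esub>)"
  by (simp_all add: upper_tri_ring_def)

lemma ut_entry:
  assumes "ring R" "M \<in> carrier (upper_tri_ring R n)"
  shows "M i j \<in> carrier R"
proof (cases "i < n \<and> j < n")
  case True then show ?thesis using assms(2) by (simp add: ut_carrier)
next
  case False
  then have "\<not> (i \<le> j \<and> j < n)" by auto
  then have "M i j = \<zero>\<^bsub>R\<^esub>" using assms(2) by (simp add: ut_carrier)
  then show ?thesis using ring.ring_simprules(2)[OF assms(1)] by simp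
qed

lemma sum_zero_terms:
  assumes "ring R" "\<And>l. l < n \<Longrightarrow> f l = \<zero>\<^bsub>R\<^esub>"
  shows "finsum R f {..<n} = \<zero>\<^bsub>R\<^esub>"
proof -
  interpret ring R by fact
  have "finsum R f {..<n} = finsum R (\<lambda>l. \<zero>\<^bsub>R\<^esub>) {..<n}"
    by (rule finsum_cong') (auto simp: assms(2))
  also have "\<dots> = \<zero>\<^bsub>R\<^esub>" by (rule finsum_zero)
  finally show ?thesis .
qed

lemma mult_entry_zero:
  assumes "ring R" "A \<in> carrier (upper_tri_ring R n)" "B \<in> carrier (upper_tri_ring R n)"
    and "\<And>l. l < n \<Longrightarrow> A i l = \<zero>\<^bsub>R\<^esub> \<or> B l j = \<zero>\<^bsub>R\<^esub>"
  shows "(A \<otimes>\<^bsub>upper_tri_ring R n\<^esub> B) i j = \<zero>\<^bsub>R\<^esub>"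
proof -
  interpret ring R by fact
  have "finsum R (\<lambda>k. A i k \<otimes>\<^bsub>R\<^esub> B k j) {..<n} = \<zero>\<^bsub>R\<^esub>"
  proof (rule sum_zero_terms[OF assms(1)])
    fix l assume "l < n"
    then show "A i l \<otimes>\<^bsub>R\<^esub> B l j = \<zero>\<^bsub>R\<^esub>" using assms(4)[of l] ut_entry[OF assms(1) assms(2)]
      ut_entry[OF assms(1) assms(3)] by auto
  qed
  then show ?thesis by (simp add: ut_mult)
qed

lemma ut_mult_closed:
  assumes "ring R" "A \<in> carrier (upper_tri_ring R n)" "B \<in> carrier (upper_tri_ring R n)"
  shows "A \<otimes>\<^bsub>upper_tri_ring R n\<^esub> B \<in> carrier (upper_tri_ring R n)"
proof -
  interpret ring R by fact
  have c: "\<And>i j. (A \<otimes>\<^bsub>upper_tri_ring R n\<^esub> B) i j \<in> carrier R"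
    using ut_entry[OF assms(1) assms(2)] ut_entry[OF assms(1) assms(3)]
    by (auto simp: ut_mult intro!: finsum_closed)
  have z: "(A \<otimes>\<^bsub>upper_tri_ring R n\<^esub> B) i j = \<zero>\<^bsub>R\<^esub>" if "\<not> (i \<le> j \<and> j < n)" for i j
  proof (cases "i < n \<and> j < n")
    case True
    then have "j < i" using that by auto
    show ?thesis
    proof (rule mult_entry_zero[OF assms])
      fix l assume "l < n"
      show "A i l = \<zero>\<^bsub>R\<^esub> \<or> B l j = \<zero>\<^bsub>R\<^esub>"
      proof (cases "l < i")
        case True then show ?thesis using assms(2) by (auto simp: ut_carrier)
      next
        case False then have "\<not> (l \<le> j \<and> j < n)" using \<open>j < i\<close> by auto
        then show ?thesis using assms(3) by (auto simp: ut_carrier)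
      qed
    qed
  next
    case False then show ?thesis by (auto simp: ut_mult)
  qed
  show ?thesis using c z by (simp add: ut_carrier)
qed

definition J :: "('a, 'm) ring_scheme \<Rightarrow> nat \<Rightarrow> nat \<Rightarrow> (nat \<Rightarrow> nat \<Rightarrow> 'a) set" where
  "J R n k = {M \<in> carrier (upper_tri_ring R n). \<forall>i j. j < i + k \<longrightarrow> M i j = \<zero>\<^bsub>R\<^esub>}"

lemma J_left:
  assumes "ring R" "M \<in> J R n k" "X \<in> carrier (upper_tri_ring R n)"
  shows "X \<otimes>\<^bsub>upper_tri_ring R n\<^esub> M \<in> J R n k"
proof -
  have Mc: "M \<in> carrier (upper_tri_ring R n)" using assms(2) by (simp add: J_def)
  have "(X \<otimes>\<^bsub>upper_tri_ring R n\<^esub> M) i j = \<zero>\<^bsub>R\<^esub>" if "j < i + k" for i j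
  proof (rule mult_entry_zero[OF assms(1) assms(3) Mc])
    fix l assume "l < n"
    show "X i l = \<zero>\<^bsub>R\<^esub> \<or> M l j = \<zero>\<^bsub>R\<^esub>"
    proof (cases "i \<le> l")
      case True then show ?thesis using assms(2) that by (auto simp: J_def)
    next
      case False then show ?thesis using assms(3) by (auto simp: ut_carrier)
    qed
  qed
  then show ?thesis using ut_mult_closed[OF assms(1) assms(3) Mc] by (simp add: J_def)
qed

lemma J_right:
  assumes "ring R" "M \<in> J R n k" "X \<in> carrier (upper_tri_ring R n)"
  shows "M \<otimes>\<^bsub>upper_tri_ring R n\<^esub> X \<in> J R n k"
proof -
  have Mc: "M \<in> carrier (upper_tri_ring R n)" using assms(2) by (simp add: J_def)
  have "(M \<otimes>\<^bsub>upper_tri_ring R n\<^esub> X) i j = \<zero>\<^bsub>R\<^esub>" if "j < i + k" for i j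
  proof (rule mult_entry_zero[OF assms(1) Mc assms(3)])
    fix l assume "l < n"
    show "M i l = \<zero>\<^bsub>R\<^esub> \<or> X l j = \<zero>\<^bsub>R\<^esub>"
    proof (cases "l < i + k")
      case True then show ?thesis using assms(2) by (auto simp: J_def)
    next
      case False then have "\<not> (l \<le> j \<and> j < n)" using that by auto
      then show ?thesis using assms(3) by (auto simp: ut_carrier)
    qed
  qed
  then show ?thesis using ut_mult_closed[OF assms(1) Mc assms(3)] by (simp add: J_def)
qed

lemma J_mult:
  assumes "ring R" "x \<in> J R n 1" "y \<in> J R n k"
  shows "x \<otimes>\<^bsub>upper_tri_ring R n\<^esub> y \<in> J R n (Suc k)"
proof -
  have xc: "x \<in> carrier (upper_tri_ring R n)" using assms(2) by (simp add: J_def)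
  have yc: "y \<in> carrier (upper_tri_ring R n)" using assms(3) by (simp add: J_def)
  have "(x \<otimes>\<^bsub>upper_tri_ring R n\<^esub> y) i j = \<zero>\<^bsub>R\<^esub>" if "j < i + Suc k" for i j
  proof (rule mult_entry_zero[OF assms(1) xc yc])
    fix l assume "l < n"
    show "x i l = \<zero>\<^bsub>R\<^esub> \<or> y l j = \<zero>\<^bsub>R\<^esub>"
    proof (cases "l < i + 1")
      case True then show ?thesis using assms(2) by (auto simp: J_def)
    next
      case False then show ?thesis using assms(3) that by (auto simp: J_def)
    qed
  qed
  then show ?thesis using ut_mult_closed[OF assms(1) xc yc] by (simp add: J_def)
qed

lemma J_ideal:
  assumes "ring R" "ring (upper_tri_ring R n)"
  shows "ideal (J R n k) (upper_tri_ring R n)"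
proof -
  interpret T: ring "upper_tri_ring R n" by fact
  interpret ring R by fact
  show ?thesis
  proof (rule idealI[OF assms(2)])
    show "subgroup (J R n k) (add_monoid (upper_tri_ring R n))"
    proof (rule T.add.subgroupI)
      show "J R n k \<subseteq> carrier (upper_tri_ring R n)" by (auto simp: J_def)
      have "\<zero>\<^bsub>upper_tri_ring R n\<^esub> \<in> J R n k"
        using T.zero_closed by (simp add: J_def ut_zero)
      then show "J R n k \<noteq> {}" by blast
    next
      fix a assume a: "a \<in> J R n k"
      then have ac: "a \<in> carrier (upper_tri_ring R n)" by (simp add: J_def)
      have "\<ominus>\<^bsub>upper_tri_ring R n\<^esub> a = (\<ominus>\<^bsub>upper_tri_ring R n\<^esub> \<one>\<^bsub>upper_tri_ring R n\<^esub>) \<otimes>\<^bsub>upper_tri_ring R n\<^esub> a"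
        using ac by (simp add: T.l_minus)
      then show "\<ominus>\<^bsub>upper_tri_ring R n\<^esub> a \<in> J R n k"
        using J_left[OF assms(1) a] by simp
    next
      fix a b assume a: "a \<in> J R n k" and b: "b \<in> J R n k"
      then have "a \<oplus>\<^bsub>upper_tri_ring R n\<^esub> b \<in> carrier (upper_tri_ring R n)"
        by (simp add: J_def)
      moreover have "(a \<oplus>\<^bsub>upper_tri_ring R n\<^esub> b) i j = \<zero>\<^bsub>R\<^esub>" if "j < i + k" for i j
        using a b that by (auto simp: J_def ut_add)
      ultimately show "a \<oplus>\<^bsub>upper_tri_ring R n\<^esub> b \<in> J R n k"
        by (simp add: J_def)
    qed
  next
    fix a x assume "a \<in> J R n k" "x \<in> carrier (upper_tri_ring R n)"
    then show "x \<otimes>\<^bsub>upper_tri_ring R n\<^esub> a \<in> J R n k" by (rule J_left[OF assms(1)])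
  next
    fix a x assume "a \<in> J R n k" "x \<in> carrier (upper_tri_ring R n)"
    then show "a \<otimes>\<^bsub>upper_tri_ring R n\<^esub> x \<in> J R n k" by (rule J_right[OF assms(1)])
  qed
qed

lemma J_n_zero:
  assumes "M \<in> J R n n" shows "M = \<zero>\<^bsub>upper_tri_ring R n\<^esub>"
proof -
  have "M i j = \<zero>\<^bsub>R\<^esub>" for i j
  proof (cases "j < n")
    case True then show ?thesis using assms by (auto simp: J_def)
  next
    case False then show ?thesis using assms by (auto simp: J_def ut_carrier)
  qed
  then show ?thesis by (auto simp: ut_zero)
qed

lemma prime_J1:
  assumes "ring R" "nc_prime_ideal (upper_tri_ring R n) P" "n \<ge> 1"
  shows "J R n 1 \<subseteq> P"
proof -
  have iP: "ideal P (upper_tri_ring R n)" using assms(2) by (simp add: nc_prime_ideal_def)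
  then have rT: "ring (upper_tri_ring R n)" by (simp add: ideal_def)
  have step: "J R n 1 \<subseteq> P \<or> J R n (n - k) \<subseteq> P" for k
  proof (induction k)
    case 0
    have "\<zero>\<^bsub>upper_tri_ring R n\<^esub> \<in> P" using iP by (simp add: additive_subgroup.zero_closed ideal_def)
    then show ?case using J_n_zero by auto
  next
    case (Suc k)
    show ?case
    proof (cases "Suc k \<le> n")
      case True
      have eq: "Suc (n - Suc k) = n - k" using True by simp
      show ?thesis
      proof (cases "J R n 1 \<subseteq> P")
        case False
        then have sub: "J R n (n - k) \<subseteq> P" using Suc by auto
        have "\<forall>x\<in>J R n 1. \<forall>y\<in>J R n (n - Suc k). x \<otimes>\<^bsub>upper_tri_ring R n\<^esub> y \<in> P"
          using J_mult[OF assms(1)] sub eq by fastforce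
        then show ?thesis using assms(2) J_ideal[OF assms(1) rT]
          unfolding nc_prime_ideal_def by blast
      qed simp
    next
      case False
      then have "n - Suc k = n - k" by simp
      then show ?thesis using Suc by simp
    qed
  qed
  from step[of "n - 1"] show ?thesis using assms(3) by simp
qed

lemma ut_finsum_entry:
  assumes "ring R" "ring (upper_tri_ring R n)" "finite S"
    "\<forall>p\<in>S. F p \<in> carrier (upper_tri_ring R n)" "i < n" "j < n"
  shows "(finsum (upper_tri_ring R n) F S) i j = finsum R (\<lambda>p. F p i j) S"
  using assms(3,4)
proof (induction S rule: finite_induct)
  case empty
  interpret T: ring "upper_tri_ring R n" by fact
  interpret ring R by fact
  show ?case by (simp add: ut_zero)
next
  case (insert x S)
  interpret T: ring "upper_tri_ring R n" by (fact assms(2))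
  interpret ring R by (fact assms(1))
  have Fc: "F \<in> S \<rightarrow> carrier (upper_tri_ring R n)" "F x \<in> carrier (upper_tri_ring R n)"
    using insert.prems by auto
  have Rc: "(\<lambda>p. F p i j) \<in> S \<rightarrow> carrier R" "F x i j \<in> carrier R"
    using insert.prems ut_entry[OF assms(1)] by auto
  have "finsum (upper_tri_ring R n) F (insert x S) =
      F x \<oplus>\<^bsub>upper_tri_ring R n\<^esub> finsum (upper_tri_ring R n) F S"
    using T.finsum_insert[OF insert.hyps(1) insert.hyps(2) Fc(1) Fc(2)] by simp
  then have "(finsum (upper_tri_ring R n) F (insert x S)) i j =
      F x i j \<oplus>\<^bsub>R\<^esub> (finsum (upper_tri_ring R n) F S) i j"
    using assms(5,6) by (simp add: ut_add)
  also have "\<dots> = F x i j \<oplus>\<^bsub>R\<^esub> finsum R (\<lambda>p. F p i j) S"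
    using insert.IH insert.prems by simp
  also have "\<dots> = finsum R (\<lambda>p. F p i j) (insert x S)"
    using finsum_insert[OF insert.hyps(1) insert.hyps(2) Rc(1) Rc(2)] by simp
  finally show ?case .
qed

lemma ut_diag:
  assumes "ring R" "A \<in> carrier (upper_tri_ring R n)" "B \<in> carrier (upper_tri_ring R n)" "i < n"
  shows "(A \<otimes>\<^bsub>upper_tri_ring R n\<^esub> B) i i = A i i \<otimes>\<^bsub>R\<^esub> B i i"
proof -
  interpret ring R by fact
  have "(A \<otimes>\<^bsub>upper_tri_ring R n\<^esub> B) i i = finsum R (\<lambda>l. A i l \<otimes>\<^bsub>R\<^esub> B l i) {..<n}"
    using assms(4) by (simp add: ut_mult)
  also have "\<dots> = finsum R (\<lambda>l. if i = l then A i l \<otimes>\<^bsub>R\<^esub> B l i else \<zero>\<^bsub>R\<^esub>) {..<n}"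
  proof (rule finsum_cong')
    fix l assume "l \<in> {..<n}"
    show "A i l \<otimes>\<^bsub>R\<^esub> B l i = (if i = l then A i l \<otimes>\<^bsub>R\<^esub> B l i else \<zero>\<^bsub>R\<^esub>)"
    proof (cases "i = l")
      case False
      show ?thesis
      proof (cases "l < i")
        case True then have "A i l = \<zero>\<^bsub>R\<^esub>" using assms(2) by (auto simp: ut_carrier)
        then show ?thesis using False ut_entry[OF assms(1) assms(3)] by simp
      next
        case f2: False then have "B l i = \<zero>\<^bsub>R\<^esub>" using assms(3) False by (auto simp: ut_carrier)
        then show ?thesis using False ut_entry[OF assms(1) assms(2)] by simp
      qed
    qed simp
  next
    show "(\<lambda>l. if i = l then A i l \<otimes>\<^bsub>R\<^esub> B l i else \<zero>\<^bsub>R\<^esub>) \<in> {..<n} \<rightarrow> carrier R"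
      using ut_entry[OF assms(1) assms(2)] ut_entry[OF assms(1) assms(3)] by auto
  qed simp
  also have "\<dots> = A i i \<otimes>\<^bsub>R\<^esub> B i i"
    using finsum_singleton[of i "{..<n}" "\<lambda>l. A i l \<otimes>\<^bsub>R\<^esub> B l i"] assms(4)
      ut_entry[OF assms(1) assms(2)] ut_entry[OF assms(1) assms(3)] by auto
  finally show ?thesis .
qed

theorem corollary2p1:
  fixes R :: "('a, 'm) ring_scheme" and n :: nat
  assumes "ring R" and "armendariz R" and "n \<ge> 1"
  shows "almost_armendariz (upper_tri_ring R n)"
  unfolding almost_armendariz_def
proof (intro allI impI)
  fix m d :: nat and a b :: "nat \<Rightarrow> nat \<Rightarrow> nat \<Rightarrow> 'a" and i j :: nat
  assume ha: "\<forall>i\<le>m. a i \<in> carrier (upper_tri_ring R n)"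
    and hb: "\<forall>j\<le>d. b j \<in> carrier (upper_tri_ring R n)"
    and hz: "\<forall>k. poly_prod_coeff (upper_tri_ring R n) m d a b k = \<zero>\<^bsub>upper_tri_ring R n\<^esub>"
    and hi: "i \<le> m" and hj: "j \<le> d"
  let ?T = "upper_tri_ring R n"
  let ?x = "a i \<otimes>\<^bsub>?T\<^esub> b j"
  have xc: "?x \<in> carrier ?T" using ut_mult_closed[OF assms(1)] ha hb hi hj by auto
  have inP: "?x \<in> P" if P: "nc_prime_ideal ?T P" for P
  proof -
    have rT: "ring ?T" using P by (simp add: nc_prime_ideal_def ideal_def)
    interpret ring R by fact
    have diag0: "?x i0 i0 = \<zero>\<^bsub>R\<^esub>" if i0: "i0 < n" for i0
    proof -
      let ?a = "\<lambda>k. a k i0 i0" and ?b = "\<lambda>k. b k i0 i0"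
      have "\<forall>k. poly_prod_coeff R m d ?a ?b k = \<zero>\<^bsub>R\<^esub>"
      proof
        fix k
        let ?S = "{p. fst p \<le> m \<and> snd p \<le> d \<and> fst p + snd p = k}"
        have fin: "finite ?S"
          by (rule finite_subset[of _ "{..m} \<times> {..d}"]) auto
        have Fc: "\<forall>p\<in>?S. a (fst p) \<otimes>\<^bsub>?T\<^esub> b (snd p) \<in> carrier ?T"
          using ut_mult_closed[OF assms(1)] ha hb by auto
        have "\<zero>\<^bsub>R\<^esub> = (poly_prod_coeff ?T m d a b k) i0 i0"
          using hz by (simp add: ut_zero)
        also have "\<dots> = finsum R (\<lambda>p. (a (fst p) \<otimes>\<^bsub>?T\<^esub> b (snd p)) i0 i0) ?S"
          unfolding poly_prod_coeff_def
          by (rule ut_finsum_entry[OF assms(1) rT fin Fc i0 i0])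
        also have "\<dots> = finsum R (\<lambda>p. ?a (fst p) \<otimes>\<^bsub>R\<^esub> ?b (snd p)) ?S"
        proof (rule finsum_cong')
          fix p assume "p \<in> ?S"
          show "(a (fst p) \<otimes>\<^bsub>?T\<^esub> b (snd p)) i0 i0 = ?a (fst p) \<otimes>\<^bsub>R\<^esub> ?b (snd p)"
          proof -
            from \<open>p \<in> ?S\<close> have "fst p \<le> m" "snd p \<le> d" by simp_all
            then have "a (fst p) \<in> carrier ?T" "b (snd p) \<in> carrier ?T" using ha hb by simp_all
            then show ?thesis using ut_diag[OF assms(1) _ _ i0] by simp
          qed
        next
          show "(\<lambda>p. ?a (fst p) \<otimes>\<^bsub>R\<^esub> ?b (snd p)) \<in> ?S \<rightarrow> carrier R"
          proof (rule Pi_I)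
            fix p assume p: "p \<in> ?S"
            have "fst p \<le> m" "snd p \<le> d" using p by simp_all
            then have c1: "a (fst p) \<in> carrier ?T" and c2: "b (snd p) \<in> carrier ?T" using ha hb by simp_all
            show "?a (fst p) \<otimes>\<^bsub>R\<^esub> ?b (snd p) \<in> carrier R"
              by (rule m_closed[OF ut_entry[OF assms(1) c1] ut_entry[OF assms(1) c2]])
          qed
        qed simp
        finally show "poly_prod_coeff R m d ?a ?b k = \<zero>\<^bsub>R\<^esub>"
          unfolding poly_prod_coeff_def by simp
      qed
      moreover have "\<forall>i\<le>m. ?a i \<in> carrier R"
      proof (intro allI impI)
        fix i assume "i \<le> m" then have "a i \<in> carrier ?T" using ha by simp
        then show "?a i \<in> carrier R" by (rule ut_entry[OF assms(1)])
      qed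
      moreover have "\<forall>j\<le>d. ?b j \<in> carrier R"
      proof (intro allI impI)
        fix j assume "j \<le> d" then have "b j \<in> carrier ?T" using hb by simp
        then show "?b j \<in> carrier R" by (rule ut_entry[OF assms(1)])
      qed
      ultimately have "?a i \<otimes>\<^bsub>R\<^esub> ?b j = \<zero>\<^bsub>R\<^esub>"
        using assms(2)[unfolded armendariz_def, rule_format, of m ?a d ?b i j] hi hj by simp
      moreover have "a i \<in> carrier ?T" "b j \<in> carrier ?T" using ha hb hi hj by simp_all
      ultimately show ?thesis using ut_diag[OF assms(1) _ _ i0] by simp
    qed
    have "?x \<in> J R n 1"
    proof -
      have "?x i0 j0 = \<zero>\<^bsub>R\<^esub>" if "j0 < i0 + 1" for i0 j0
      proof (cases "j0 = i0 \<and> i0 < n")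
        case True then show ?thesis using diag0 by auto
      next
        case False
        then have "\<not> (i0 \<le> j0 \<and> j0 < n)" using that by auto
        then show ?thesis using xc by (auto simp: ut_carrier)
      qed
      then show ?thesis using xc by (simp add: J_def)
    qed
    then show ?thesis using prime_J1[OF assms(1) P assms(3)] by auto
  qed
  show "?x \<in> prime_radical ?T"
    unfolding prime_radical_def using xc inP by auto
qed

end
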